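(* Consider the algorithmic framework described below, with arbitrary parameters $\xi>1$, $\gamma\in(0,1)$, $\eta\ge 1$, in either its non-amortized or amortized variant. At all times (after the first job has arrived and after each insertion procedure), the current guess $T$ satisfies $\xi^{-1}T<\mathrm{OPT}(I^* )$, where $I^*$ is the instance consisting of all jobs arrived so far.
   Context: Problem: machines $1,\dots,m$ with speeds $s_1\ge s_2\ge\dots\ge s_m>0$; jobs arrive online, job $j$ has size $p_j>0$; the load of job $j$ on machine $i$ is $p_j/s_i$; $\mathrm{OPT}(I^* )$ is the minimum possible maximum machine load over all assignments of the jobs of $I^*$ to machines. Framework: it keeps a guess $T$, and for each machine $i$ a partition of its jobs into old jobs $\hat J_i$ and new jobs $\check J_i$; in the amortized variant also a potential $\pi_i$ per machine. Machine $i$ is saturated if $\check\ell_i:=\sum_{j\in\check J_i}p_j/s_i\ge T$, and $\eta$-eligible for job $j$ if $p_j/s_i\le \eta T$. Let $\tilde{\mathcal M}(\eta,j)$ be the set of machines that are $\eta$-eligible for $j$ and not saturated. When the first job $j_1$ arrives, set $T=p_{j_1}/s_1$ and place $j_1$ on machine 1. When a later job $j^*$ arrives, put it into a priority queue $Q$ (larger size = higher priority) and run: while $Q$ is nonempty, remove the largest job $j'$ from $Q$; then repeat: if $\tilde{\mathcal M}(\eta,j')\ne\emptyset$, choose a slowest machine $i'$ in it, move every $j\in\hat J_{i'}$ with $p_j\ge \eta^{-1}p_{j'}$ from $\hat J_{i'}$ to $\check J_{i'}$, and if $i'$ is still not saturated stop repeating; otherwise (if $\tilde{\mathcal M}(\eta,j')=\emptyset$)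 set $T:=\xi T$ and for every machine $i$ move all jobs of $\check J_i$ to $\hat J_i$ (and, in the amortized variant, set $\pi_i=0$). After a machine $i'$ is found, set $\pi:=\gamma p_{j'}$ (amortized variant: $\pi:=\gamma p_{j'}+\pi_{i'}$); go through the jobs $j\in\hat J_{i'}$ in non-increasing order of size and, whenever $p_j\le\pi$, set $\pi:=\pi-p_j$ and move $j$ from $\hat J_{i'}$ into $Q$ (i.e., remove it from machine $i'$ to be reinserted). Finally assign $j'$ to $i'$ by adding it to $\check J_{i'}$ (amortized variant: and set $\pi_{i'}:=\pi$). *)

theory Defs
  imports Complex_Main "HOL-Library.FuncSet"
begin

text \<open>Machines are indexed 0..m-1 (machine 0 is the fastest, i.e. the paper's machine 1).
Jobs are identified by their arrival index 0,1,2,...; job j has size p j.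
The instance after n arrivals consists of the jobs {0..<n}.\<close>

definition OPT :: "nat \<Rightarrow> (nat \<Rightarrow> real) \<Rightarrow> (nat \<Rightarrow> real) \<Rightarrow> nat set \<Rightarrow> real" where
  "OPT m s p J = Min ((\<lambda>\<sigma>. Max ((\<lambda>i. (\<Sum>j\<in>{j\<in>J. \<sigma> j = i}. p j) / s i) ` {..<m}))
                       ` (J \<rightarrow>\<^sub>E {..<m}))"

record cfg =
  gT :: real
  oldJ :: "nat \<Rightarrow> nat set"
  newJ :: "nat \<Rightarrow> nat set"
  pot :: "nat \<Rightarrow> real"
  queue :: "nat set"
  cur :: "nat option"            \<comment> \<open>the job j' currently being placed, if any\<close>

definition saturated :: "(nat \<Rightarrow> real) \<Rightarrow> (nat \<Rightarrow> real) \<Rightarrow> cfg \<Rightarrow> nat \<Rightarrow> bool" where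
  "saturated s p c i \<longleftrightarrow> (\<Sum>j\<in>newJ c i. p j / s i) \<ge> gT c"

definition Mt :: "nat \<Rightarrow> (nat \<Rightarrow> real) \<Rightarrow> (nat \<Rightarrow> real) \<Rightarrow> real \<Rightarrow> cfg \<Rightarrow> nat \<Rightarrow> nat set" where
  "Mt m s p \<eta> c j = {i. i < m \<and> p j / s i \<le> \<eta> * gT c \<and> \<not> saturated s p c i}"

definition promote :: "(nat \<Rightarrow> real) \<Rightarrow> real \<Rightarrow> cfg \<Rightarrow> nat \<Rightarrow> nat \<Rightarrow> cfg" where
  "promote p \<eta> c i j =
     c\<lparr>oldJ := (oldJ c)(i := {k \<in> oldJ c i. \<not> (p j / \<eta> \<le> p k)}),
       newJ := (newJ c)(i := newJ c i \<union> {k \<in> oldJ c i. p j / \<eta> \<le> p k})\<rparr>"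

text \<open>Greedy pass through the old jobs (given in non-increasing order of size) with budget \<pi>:
returns the set of removed jobs and the remaining budget.\<close>
fun greedy :: "(nat \<Rightarrow> real) \<Rightarrow> real \<Rightarrow> nat list \<Rightarrow> nat set \<times> real" where
  "greedy p \<pi> [] = ({}, \<pi>)"
| "greedy p \<pi> (x # xs) =
     (if p x \<le> \<pi> then (let (R, \<pi>') = greedy p (\<pi> - p x) xs in (insert x R, \<pi>'))
      else greedy p \<pi> xs)"

text \<open>One atomic step of the insertion procedure (all nondeterministic tie-breaking allowed).\<close>
inductive step :: "nat \<Rightarrow> (nat \<Rightarrow> real) \<Rightarrow> (nat \<Rightarrow> real) \<Rightarrow> real \<Rightarrow> real \<Rightarrow> real \<Rightarrow> bool
                    \<Rightarrow> cfg \<Rightarrow> cfg \<Rightarrow> bool"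
  for m s p \<xi> \<gamma> \<eta> amort where
  pick: "\<lbrakk> cur c = None; j \<in> queue c; \<forall>k\<in>queue c. p k \<le> p j \<rbrakk>
         \<Longrightarrow> step m s p \<xi> \<gamma> \<eta> amort c (c\<lparr>queue := queue c - {j}, cur := Some j\<rparr>)"
| raise: "\<lbrakk> cur c = Some j; Mt m s p \<eta> c j = {} \<rbrakk>
         \<Longrightarrow> step m s p \<xi> \<gamma> \<eta> amort c
               (c\<lparr>gT := \<xi> * gT c, oldJ := (\<lambda>i. oldJ c i \<union> newJ c i), newJ := (\<lambda>i. {}),
                  pot := (if amort then (\<lambda>i. 0) else pot c)\<rparr>)"
| promote_sat: "\<lbrakk> cur c = Some j; i \<in> Mt m s p \<eta> c j; \<forall>k\<in>Mt m s p \<eta> c j. s i \<le> s k;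
                 saturated s p (promote p \<eta> c i j) i \<rbrakk>
         \<Longrightarrow> step m s p \<xi> \<gamma> \<eta> amort c (promote p \<eta> c i j)"
| place: "\<lbrakk> cur c = Some j; i \<in> Mt m s p \<eta> c j; \<forall>k\<in>Mt m s p \<eta> c j. s i \<le> s k;
           c' = promote p \<eta> c i j; \<not> saturated s p c' i;
           distinct xs; set xs = oldJ c' i; sorted_wrt (\<lambda>a b. p b \<le> p a) xs;
           greedy p (\<gamma> * p j + (if amort then pot c' i else 0)) xs = (R, \<pi>) \<rbrakk>
         \<Longrightarrow> step m s p \<xi> \<gamma> \<eta> amort c
               (c'\<lparr>oldJ := (oldJ c')(i := oldJ c' i - R),
                   newJ := (newJ c')(i := insert j (newJ c' i)),
                   queue := queue c' \<union> R, cur := None,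
                   pot := (if amort then (pot c')(i := \<pi>) else pot c')\<rparr>)"

definition init_cfg :: "(nat \<Rightarrow> real) \<Rightarrow> (nat \<Rightarrow> real) \<Rightarrow> cfg" where
  "init_cfg s p = \<lparr>gT = p 0 / s 0, oldJ = (\<lambda>i. {}), newJ = (\<lambda>i. {})(0 := {0}),
                   pot = (\<lambda>i. 0), queue = {}, cur = None\<rparr>"

text \<open>reach ... n c: c is a configuration of the algorithm after n jobs (0..n-1) have arrived
and the corresponding insertion procedures have terminated.\<close>
inductive reach :: "nat \<Rightarrow> (nat \<Rightarrow> real) \<Rightarrow> (nat \<Rightarrow> real) \<Rightarrow> real \<Rightarrow> real \<Rightarrow> real \<Rightarrow> bool
                    \<Rightarrow> nat \<Rightarrow> cfg \<Rightarrow> bool"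
  for m s p \<xi> \<gamma> \<eta> amort where
  first: "reach m s p \<xi> \<gamma> \<eta> amort 1 (init_cfg s p)"
| arrive: "\<lbrakk> reach m s p \<xi> \<gamma> \<eta> amort n c;
            (step m s p \<xi> \<gamma> \<eta> amort)\<^sup>*\<^sup>* (c\<lparr>queue := {n}\<rparr>) c';
            queue c' = {}; cur c' = None \<rbrakk>
         \<Longrightarrow> reach m s p \<xi> \<gamma> \<eta> amort (Suc n) c'"

end

theory Submission
  imports Defs
begin

definition inv :: "nat \<Rightarrow> (nat\<Rightarrow>real) \<Rightarrow> (nat\<Rightarrow>real) \<Rightarrow> real \<Rightarrow> nat \<Rightarrow> cfg \<Rightarrow> bool" where
"inv m s p \<xi> N c \<longleftrightarrow> gT c > 0
  \<and> (\<forall>i. oldJ c i \<subseteq> {..<N} \<and> newJ c i \<subseteq> {..<N}) \<and> queue c \<subseteq> {..<N}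
  \<and> (\<forall>j. cur c = Some j \<longrightarrow> j < N \<and> j \<notin> queue c \<and> (\<forall>i. j \<notin> oldJ c i \<and> j \<notin> newJ c i))
  \<and> (\<forall>i i'. oldJ c i \<inter> newJ c i' = {})
  \<and> (\<forall>i i'. i \<noteq> i' \<longrightarrow> oldJ c i \<inter> oldJ c i' = {} \<and> newJ c i \<inter> newJ c i' = {})
  \<and> (\<forall>i. queue c \<inter> oldJ c i = {} \<and> queue c \<inter> newJ c i = {})
  \<and> (\<forall>i i' k. k \<in> newJ c i \<longrightarrow> i' < m \<longrightarrow> s i' < s i \<longrightarrow> \<not> saturated s p c i' \<longrightarrow> gT c * s i' < p k)
  \<and> (\<forall>\<sigma>. (\<forall>k<N. \<sigma> k < m) \<longrightarrow> (\<exists>i<m. gT c / \<xi> < (\<Sum>k\<in>{k\<in>{0..<N}. \<sigma> k = i}. p k) / s i))"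

lemma greedy_sub: "fst (greedy p \<pi> xs) \<subseteq> set xs"
proof (induction xs arbitrary: \<pi>)
  case (Cons a xs)
  then show ?case
  proof (cases "p a \<le> \<pi>")
    case True
    obtain R q where "greedy p (\<pi> - p a) xs = (R, q)" by fastforce
    with True Cons.IH[of "\<pi> - p a"] show ?thesis by auto
  next
    case False
    with Cons.IH[of \<pi>] show ?thesis by auto
  qed
qed simp

lemma sat_iff:
  assumes "s i > 0"
  shows "saturated s p c i \<longleftrightarrow> gT c * s i \<le> (\<Sum>j\<in>newJ c i. p j)"
  using assms by (simp add: saturated_def sum_divide_distrib[symmetric] pos_le_divide_eq)

lemma sat_mono:
  assumes "s i > 0" "\<forall>j. p j > 0" "gT c' = gT c" "finite (newJ c' i)" "newJ c i \<subseteq> newJ c' i"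
    "saturated s p c i"
  shows "saturated s p c' i"
proof -
  have "(\<Sum>j\<in>newJ c i. p j) \<le> (\<Sum>j\<in>newJ c' i. p j)"
    using assms by (intro sum_mono2) (auto intro: less_imp_le)
  thus ?thesis using assms sat_iff[of s i p] by auto
qed

lemma raise_bound:
  assumes sdec: "\<forall>i j. i \<le> j \<longrightarrow> j < m \<longrightarrow> s j \<le> s i"
    and spos: "\<forall>i<m. s i > 0" and ppos: "\<forall>j. p j > 0" and eta: "\<eta> \<ge> 1"
    and Tpos: "gT c > 0"
    and sub: "\<forall>i. newJ c i \<subseteq> {..<N}" and jN: "j < N"
    and disj: "\<forall>i i'. i \<noteq> i' \<longrightarrow> newJ c i \<inter> newJ c i' = {}"
    and jnot: "\<forall>i. j \<notin> newJ c i"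
    and K: "\<forall>i i' k. k \<in> newJ c i \<longrightarrow> i' < m \<longrightarrow> s i' < s i \<longrightarrow> \<not> saturated s p c i' \<longrightarrow> gT c * s i' < p k"
    and Mt: "Mt m s p \<eta> c j = {}"
    and \<sigma>: "\<forall>k<N. \<sigma> k < m"
  shows "\<exists>i<m. gT c < (\<Sum>k\<in>{k\<in>{0..<N}. \<sigma> k = i}. p k) / s i"
proof (rule ccontr)
  assume NT: "\<not> ?thesis"
  have H: "\<forall>i<m. (\<Sum>k\<in>{k\<in>{0..<N}. \<sigma> k = i}. p k) \<le> gT c * s i"
  proof (intro allI impI)
    fix i assume "i < m"
    hence "(\<Sum>k\<in>{k\<in>{0..<N}. \<sigma> k = i}. p k) / s i \<le> gT c" "s i > 0" using NT spos by (meson not_less)+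
    thus "(\<Sum>k\<in>{k\<in>{0..<N}. \<sigma> k = i}. p k) \<le> gT c * s i" by (simp add: pos_divide_le_eq)
  qed
  define T where "T = gT c"
  define S where "S = {i. i < m \<and> (\<forall>i'<m. \<not> saturated s p c i' \<longrightarrow> s i' < s i)}"
  define X where "X = insert j (\<Union>i\<in>S. newJ c i)"
  have finS: "finite S" unfolding S_def by auto
  have finN: "finite (newJ c i)" for i using sub finite_subset by blast
  have satS: "saturated s p c i" if "i \<in> S" for i using that unfolding S_def by auto
  have notMt: "T * s r < p j" if "r < m" "\<not> saturated s p c r" for r
  proof -
    have "r \<notin> Mt m s p \<eta> c j" using Mt by auto
    hence "\<eta> * T < p j / s r" using that unfolding Mt_def T_def by auto
    hence "\<eta> * T * s r < p j" using spos that by (simp add: pos_less_divide_eq)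
    moreover have "T * s r \<le> \<eta> * T * s r" using eta Tpos spos that unfolding T_def
      by (simp add: mult_right_mono)
    ultimately show ?thesis by linarith
  qed
  have bigk: "T * s r < p k" if "k \<in> X" "r < m" "\<not> saturated s p c r" "\<forall>i\<in>S. s r < s i" for k r
  proof -
    from that(1) consider "k = j" | i where "i \<in> S" "k \<in> newJ c i" unfolding X_def by auto
    then show ?thesis
    proof cases
      case 1 thus ?thesis using notMt that by auto
    next
      case 2 thus ?thesis using K that unfolding T_def by auto
    qed
  qed
  have XS: "\<sigma> k \<in> S" if "k \<in> X" for k
  proof (rule ccontr)
    assume nS: "\<sigma> k \<notin> S"
    have kN: "k < N" using that sub jN unfolding X_def by fastforce
    hence km: "\<sigma> k < m" using \<sigma> by auto
    then obtain r where r: "r < m" "\<not> saturated s p c r" "s (\<sigma> k) \<le> s r"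
      using nS unfolding S_def by (auto simp: not_less)
    have "\<forall>i\<in>S. s r < s i" using r unfolding S_def by auto
    hence "T * s r < p k" using bigk that r by auto
    moreover have "T * s (\<sigma> k) \<le> T * s r" using r Tpos unfolding T_def by auto
    moreover have "p k \<le> (\<Sum>k'\<in>{k'\<in>{0..<N}. \<sigma> k' = \<sigma> k}. p k')"
      using kN ppos by (intro member_le_sum) (auto intro: less_imp_le)
    ultimately show False using H km unfolding T_def by fastforce
  qed
  have finX: "finite X" unfolding X_def using finS finN by auto
  have XN: "X \<subseteq> {0..<N}" using sub jN unfolding X_def by fastforce
  have "(\<Sum>k\<in>X. p k) = (\<Sum>i\<in>S. (\<Sum>k\<in>{k\<in>X. \<sigma> k = i}. p k))"
    using sum.group[OF finX finS, of \<sigma> p] XS by (metis image_subsetI)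
  also have "\<dots> \<le> (\<Sum>i\<in>S. (\<Sum>k\<in>{k\<in>{0..<N}. \<sigma> k = i}. p k))"
    using XN ppos by (intro sum_mono sum_mono2) (auto intro: less_imp_le)
  also have "\<dots> \<le> (\<Sum>i\<in>S. T * s i)"
    using H unfolding S_def T_def by (intro sum_mono) auto
  finally have A: "(\<Sum>k\<in>X. p k) \<le> (\<Sum>i\<in>S. T * s i)" .
  have "(\<Sum>k\<in>X. p k) = p j + (\<Sum>k\<in>(\<Union>i\<in>S. newJ c i). p k)"
    unfolding X_def using jnot finS finN by (subst sum.insert) auto
  also have "(\<Sum>k\<in>(\<Union>i\<in>S. newJ c i). p k) = (\<Sum>i\<in>S. (\<Sum>k\<in>newJ c i. p k))"
    using finS finN disj by (intro sum.UNION_disjoint) auto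
  finally have B: "(\<Sum>k\<in>X. p k) = p j + (\<Sum>i\<in>S. (\<Sum>k\<in>newJ c i. p k))" .
  have "(\<Sum>i\<in>S. T * s i) \<le> (\<Sum>i\<in>S. (\<Sum>k\<in>newJ c i. p k))"
    using satS sat_iff spos unfolding S_def T_def by (intro sum_mono) auto
  thus False using A B ppos[rule_format, of j] by linarith
qed

lemma pick_inv:
  assumes "inv m s p \<xi> N c" "cur c = None" "j \<in> queue c"
  shows "inv m s p \<xi> N (c\<lparr>queue := queue c - {j}, cur := Some j\<rparr>)"
proof -
  have S: "saturated s p (c\<lparr>queue := queue c - {j}, cur := Some j\<rparr>) = saturated s p c"
    unfolding saturated_def by simp
  have D: "\<forall>i. queue c \<inter> oldJ c i = {} \<and> queue c \<inter> newJ c i = {}" "queue c \<subseteq> {..<N}"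
    using assms(1) unfolding inv_def by simp_all
  have "\<forall>i. j \<notin> oldJ c i \<and> j \<notin> newJ c i" "j < N" using D assms(3) by blast+
  then show ?thesis using assms(1,2) D unfolding inv_def S by auto
qed

lemma raise_inv:
  assumes sdec: "\<forall>i j. i \<le> j \<longrightarrow> j < m \<longrightarrow> s j \<le> s i"
    and spos: "\<forall>i<m. s i > 0" and ppos: "\<forall>j. p j > 0" and eta: "\<eta> \<ge> 1" and xi: "\<xi> > 1"
    and I: "inv m s p \<xi> N c" and cj: "cur c = Some j" and Mt: "Mt m s p \<eta> c j = {}"
  shows "inv m s p \<xi> N (c\<lparr>gT := \<xi> * gT c, oldJ := (\<lambda>i. oldJ c i \<union> newJ c i), newJ := (\<lambda>i. {}),
                  pot := (if amort then (\<lambda>i. 0) else pot c)\<rparr>)"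
proof -
  have B: "\<forall>\<sigma>. (\<forall>k<N. \<sigma> k < m) \<longrightarrow> (\<exists>i<m. gT c < (\<Sum>k\<in>{k\<in>{0..<N}. \<sigma> k = i}. p k) / s i)"
  proof (intro allI impI)
    fix \<sigma> :: "nat \<Rightarrow> nat" assume "\<forall>k<N. \<sigma> k < m"
    then show "\<exists>i<m. gT c < (\<Sum>k\<in>{k\<in>{0..<N}. \<sigma> k = i}. p k) / s i"
    proof -
      have "gT c > 0" "\<forall>i. newJ c i \<subseteq> {..<N}" "j < N"
        "\<forall>i i'. i \<noteq> i' \<longrightarrow> newJ c i \<inter> newJ c i' = {}" "\<forall>i. j \<notin> newJ c i"
        "\<forall>i i' k. k \<in> newJ c i \<longrightarrow> i' < m \<longrightarrow> s i' < s i \<longrightarrow> \<not> saturated s p c i' \<longrightarrow> gT c * s i' < p k"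
        using I cj unfolding inv_def by simp_all
      from raise_bound[OF sdec spos ppos eta this Mt \<open>\<forall>k<N. \<sigma> k < m\<close>] show ?thesis .
    qed
  qed
  have T: "gT c > 0" using I unfolding inv_def by auto
  have "\<xi> * gT c / \<xi> = gT c" using xi by auto
  moreover have D: "\<forall>i i'. oldJ c i \<inter> newJ c i' = {}"
    "\<forall>i i'. i \<noteq> i' \<longrightarrow> oldJ c i \<inter> oldJ c i' = {} \<and> newJ c i \<inter> newJ c i' = {}"
    "\<forall>i. queue c \<inter> oldJ c i = {} \<and> queue c \<inter> newJ c i = {}"
    "\<forall>i. oldJ c i \<subseteq> {..<N} \<and> newJ c i \<subseteq> {..<N}" "queue c \<subseteq> {..<N}"
    "\<forall>j. cur c = Some j \<longrightarrow> j < N \<and> j \<notin> queue c \<and> (\<forall>i. j \<notin> oldJ c i \<and> j \<notin> newJ c i)"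
    using I unfolding inv_def by auto
  moreover have "\<forall>i i'. i \<noteq> i' \<longrightarrow> (oldJ c i \<union> newJ c i) \<inter> (oldJ c i' \<union> newJ c i') = {}"
    using D(1,2) by blast
  moreover have "\<forall>i. queue c \<inter> (oldJ c i \<union> newJ c i) = {}" using D(3) by blast
  ultimately show ?thesis using B T xi unfolding inv_def saturated_def by simp
qed

lemma notMt_big:
  assumes spos: "\<forall>i<m. s i > 0" and eta: "\<eta> \<ge> 1" and T: "gT c > 0"
    and r: "r < m" "\<not> saturated s p c r" "r \<notin> Mt m s p \<eta> c j"
  shows "\<eta> * gT c * s r < p j" "gT c * s r < p j"
proof -
  have "\<eta> * gT c < p j / s r" using r unfolding Mt_def by auto
  thus A: "\<eta> * gT c * s r < p j" using spos r by (simp add: pos_less_divide_eq)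
  moreover have "gT c * s r \<le> \<eta> * gT c * s r" using eta T spos r
    by (simp add: mult_right_mono)
  ultimately show "gT c * s r < p j" by linarith
qed

lemma promote_inv:
  assumes spos: "\<forall>i<m. s i > 0" and ppos: "\<forall>j. p j > 0" and eta: "\<eta> \<ge> 1"
    and I: "inv m s p \<xi> N c" and cj: "cur c = Some j" and iM: "i \<in> Mt m s p \<eta> c j"
    and slow: "\<forall>k\<in>Mt m s p \<eta> c j. s i \<le> s k"
  shows "inv m s p \<xi> N (promote p \<eta> c i j)"
    "\<forall>i'<m. s i' < s i \<longrightarrow> \<not> saturated s p (promote p \<eta> c i j) i' \<longrightarrow> gT c * s i' < p j"
    "cur (promote p \<eta> c i j) = Some j" "gT (promote p \<eta> c i j) = gT c"
    "queue (promote p \<eta> c i j) = queue c"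
proof -
  define c' where "c' = promote p \<eta> c i j"
  define P where "P = {k \<in> oldJ c i. p j / \<eta> \<le> p k}"
  have O1: "\<forall>x. oldJ c' x \<subseteq> oldJ c x" and O2: "oldJ c' i \<inter> P = {}"
    and N1: "\<forall>x. x \<noteq> i \<longrightarrow> newJ c' x = newJ c x" and N2: "newJ c' i = newJ c i \<union> P"
    and PO: "P \<subseteq> oldJ c i" and G: "gT c' = gT c" "queue c' = queue c" "cur c' = cur c"
    unfolding c'_def P_def promote_def by auto
  have sub: "\<forall>i. oldJ c i \<subseteq> {..<N} \<and> newJ c i \<subseteq> {..<N}" "queue c \<subseteq> {..<N}"
    and cur: "\<forall>j. cur c = Some j \<longrightarrow> j < N \<and> j \<notin> queue c \<and> (\<forall>i. j \<notin> oldJ c i \<and> j \<notin> newJ c i)"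
    and D1: "\<forall>i i'. oldJ c i \<inter> newJ c i' = {}"
    and D2: "\<forall>i i'. i \<noteq> i' \<longrightarrow> oldJ c i \<inter> oldJ c i' = {} \<and> newJ c i \<inter> newJ c i' = {}"
    and D3: "\<forall>i. queue c \<inter> oldJ c i = {} \<and> queue c \<inter> newJ c i = {}"
    and K: "\<forall>i i' k. k \<in> newJ c i \<longrightarrow> i' < m \<longrightarrow> s i' < s i \<longrightarrow> \<not> saturated s p c i' \<longrightarrow> gT c * s i' < p k"
    and B: "\<forall>\<sigma>. (\<forall>k<N. \<sigma> k < m) \<longrightarrow> (\<exists>i<m. gT c / \<xi> < (\<Sum>k\<in>{k\<in>{0..<N}. \<sigma> k = i}. p k) / s i)"
    and T: "gT c > 0"
    using I unfolding inv_def by simp_all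
  have sub': "\<forall>i. oldJ c' i \<subseteq> {..<N} \<and> newJ c' i \<subseteq> {..<N}"
    using sub O1 N1 N2 PO by (metis Un_least subset_trans)
  have finN': "finite (newJ c' x)" for x using sub' finite_subset by blast
  have unsat: "\<not> saturated s p c x" if "x < m" "\<not> saturated s p c' x" for x
  proof
    assume "saturated s p c x"
    moreover have "newJ c x \<subseteq> newJ c' x" using N1 N2 by (cases "x = i") auto
    ultimately have "saturated s p c' x" using sat_mono[of s x p c' c] spos ppos G finN' that by auto
    thus False using that by simp
  qed
  have jbig: "gT c * s x < p j" "\<eta> * gT c * s x < p j" if "x < m" "s x < s i" "\<not> saturated s p c' x" for x
  proof -
    have u: "\<not> saturated s p c x" using unsat that by auto
    have "x \<notin> Mt m s p \<eta> c j" using slow that by force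
    then show "gT c * s x < p j" "\<eta> * gT c * s x < p j" using notMt_big[OF spos eta T that(1) u] by simp_all
  qed
  have K': "\<forall>x x' k. k \<in> newJ c' x \<longrightarrow> x' < m \<longrightarrow> s x' < s x \<longrightarrow> \<not> saturated s p c' x' \<longrightarrow> gT c' * s x' < p k"
  proof (intro allI impI)
    fix x x' k assume k: "k \<in> newJ c' x" and x': "x' < m" "s x' < s x" "\<not> saturated s p c' x'"
    show "gT c' * s x' < p k"
    proof (cases "k \<in> newJ c x")
      case True thus ?thesis using K x' unsat G by auto
    next
      case False
      hence xi: "x = i" and kP: "k \<in> P" using k N1 N2 by (cases "x = i"; auto)+
      have "\<eta> * gT c * s x' < p j" using jbig x' xi by auto
      moreover have "p j \<le> \<eta> * p k" using eta kP unfolding P_def by (auto simp: divide_le_eq mult.commute)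
      ultimately have "\<eta> * (gT c * s x') < \<eta> * p k" by (simp add: mult.assoc)
      hence "gT c * s x' < p k" using eta by (simp add: mult_less_cancel_left)
      thus ?thesis using eta G by auto
    qed
  qed
  have cur': "\<forall>j. cur c' = Some j \<longrightarrow> j < N \<and> j \<notin> queue c' \<and> (\<forall>i. j \<notin> oldJ c' i \<and> j \<notin> newJ c' i)"
  proof (intro allI impI)
    fix j' assume "cur c' = Some j'"
    hence j': "cur c = Some j'" using G by simp
    have "newJ c' x \<subseteq> newJ c x \<union> oldJ c x" for x using N1 N2 PO by (cases "x = i") auto
    thus "j' < N \<and> j' \<notin> queue c' \<and> (\<forall>i. j' \<notin> oldJ c' i \<and> j' \<notin> newJ c' i)"
      using cur j' G O1 by blast
  qed
  have D1': "\<forall>x x'. oldJ c' x \<inter> newJ c' x' = {}"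
  proof (intro allI)
    fix x x'
    show "oldJ c' x \<inter> newJ c' x' = {}"
    proof (cases "x' = i")
      case True
      have "oldJ c' x \<inter> P = {}" using O2 O1 PO D2 by (cases "x = i") blast+
      thus ?thesis using True N2 O1 D1 by blast
    next
      case False thus ?thesis using N1 O1 D1 by blast
    qed
  qed
  have D2': "\<forall>x x'. x \<noteq> x' \<longrightarrow> oldJ c' x \<inter> oldJ c' x' = {} \<and> newJ c' x \<inter> newJ c' x' = {}"
  proof (intro allI impI conjI)
    fix x x' :: nat assume ne: "x \<noteq> x'"
    show "oldJ c' x \<inter> oldJ c' x' = {}" using O1 D2 ne by blast
    show "newJ c' x \<inter> newJ c' x' = {}"
    proof -
      have "newJ c' y \<subseteq> newJ c y \<union> (if y = i then P else {})" for y
        using N1 N2 by (cases "y = i") auto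
      moreover have "P \<inter> newJ c y = {}" for y using PO D1 by blast
      ultimately show ?thesis
      proof -
        assume A: "\<And>y. newJ c' y \<subseteq> newJ c y \<union> (if y = i then P else {})" and C: "\<And>y. P \<inter> newJ c y = {}"
        have "newJ c x \<inter> newJ c x' = {}" using D2 ne by blast
        moreover have "P \<inter> P = {} \<or> x \<noteq> i \<or> x' \<noteq> i" using ne by blast
        ultimately show ?thesis using A[of x] A[of x'] C[of x] C[of x']
        proof (cases "x = i")
          case True
          hence "x' \<noteq> i" using ne by simp
          hence "newJ c' x \<subseteq> newJ c x \<union> P" "newJ c' x' \<subseteq> newJ c x'" using A[of x] A[of x'] True by auto
          thus ?thesis using C[of x'] \<open>newJ c x \<inter> newJ c x' = {}\<close> by blast
        next
          case False
          hence "newJ c' x \<subseteq> newJ c x" "newJ c' x' \<subseteq> newJ c x' \<union> (if x' = i then P else {})" using A[of x] A[of x'] by auto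
          thus ?thesis using C[of x] \<open>newJ c x \<inter> newJ c x' = {}\<close> by (auto split: if_splits)
        qed
      qed
    qed
  qed
  have D3': "\<forall>x. queue c' \<inter> oldJ c' x = {} \<and> queue c' \<inter> newJ c' x = {}"
  proof
    fix x
    have "newJ c' x \<subseteq> newJ c x \<union> oldJ c i" using N1 N2 PO by (cases "x = i") auto
    thus "queue c' \<inter> oldJ c' x = {} \<and> queue c' \<inter> newJ c' x = {}" using D3 G O1 by blast
  qed
  show "inv m s p \<xi> N c'" unfolding inv_def
    using T G sub' sub cur' D1' D2' D3' K' B by simp
  show "\<forall>i'<m. s i' < s i \<longrightarrow> \<not> saturated s p c' i' \<longrightarrow> gT c * s i' < p j" using jbig(1) by blast
  show "cur c' = Some j" "gT c' = gT c" "queue c' = queue c" using G cj by auto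
qed

lemma place_inv:
  assumes spos: "\<forall>i<m. s i > 0" and ppos: "\<forall>j. p j > 0"
    and I: "inv m s p \<xi> N c'" and cj: "cur c' = Some j" and im: "i < m"
    and jb: "\<forall>i'<m. s i' < s i \<longrightarrow> \<not> saturated s p c' i' \<longrightarrow> gT c' * s i' < p j"
    and R: "R \<subseteq> oldJ c' i"
  shows "inv m s p \<xi> N (c'\<lparr>oldJ := (oldJ c')(i := oldJ c' i - R),
                   newJ := (newJ c')(i := insert j (newJ c' i)),
                   queue := queue c' \<union> R, cur := None,
                   pot := PP\<rparr>)" (is "inv m s p \<xi> N ?c")
proof -
  have sub: "\<forall>i. oldJ c' i \<subseteq> {..<N} \<and> newJ c' i \<subseteq> {..<N}" "queue c' \<subseteq> {..<N}"
    and cur: "\<forall>j. cur c' = Some j \<longrightarrow> j < N \<and> j \<notin> queue c' \<and> (\<forall>i. j \<notin> oldJ c' i \<and> j \<notin> newJ c' i)"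
    and D1: "\<forall>i i'. oldJ c' i \<inter> newJ c' i' = {}"
    and D2: "\<forall>i i'. i \<noteq> i' \<longrightarrow> oldJ c' i \<inter> oldJ c' i' = {} \<and> newJ c' i \<inter> newJ c' i' = {}"
    and D3: "\<forall>i. queue c' \<inter> oldJ c' i = {} \<and> queue c' \<inter> newJ c' i = {}"
    and K: "\<forall>i i' k. k \<in> newJ c' i \<longrightarrow> i' < m \<longrightarrow> s i' < s i \<longrightarrow> \<not> saturated s p c' i' \<longrightarrow> gT c' * s i' < p k"
    and B: "\<forall>\<sigma>. (\<forall>k<N. \<sigma> k < m) \<longrightarrow> (\<exists>i<m. gT c' / \<xi> < (\<Sum>k\<in>{k\<in>{0..<N}. \<sigma> k = i}. p k) / s i)"
    and T: "gT c' > 0"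
    using I unfolding inv_def by simp_all
  have jN: "j < N" "j \<notin> queue c'" "\<forall>x. j \<notin> oldJ c' x \<and> j \<notin> newJ c' x" using cur cj by auto
  have O: "oldJ ?c x \<subseteq> oldJ c' x" for x by auto
  have Nw: "newJ ?c x \<subseteq> newJ c' x \<union> (if x = i then {j} else {})" for x by auto
  have Nw2: "newJ c' x \<subseteq> newJ ?c x" for x by auto
  have sub': "\<forall>x. oldJ ?c x \<subseteq> {..<N} \<and> newJ ?c x \<subseteq> {..<N}"
  proof
    fix x show "oldJ ?c x \<subseteq> {..<N} \<and> newJ ?c x \<subseteq> {..<N}"
      using O[of x] Nw[of x] sub jN by (auto split: if_splits)
  qed
  have q': "queue ?c \<subseteq> {..<N}" using sub R by force
  have finN: "finite (newJ ?c x)" for x using sub' finite_subset by blast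
  have unsat: "\<not> saturated s p c' x" if "x < m" "\<not> saturated s p ?c x" for x
    using sat_mono[of s x p ?c c'] spos ppos finN Nw2 that by auto
  have K': "\<forall>x x' k. k \<in> newJ ?c x \<longrightarrow> x' < m \<longrightarrow> s x' < s x \<longrightarrow> \<not> saturated s p ?c x' \<longrightarrow> gT ?c * s x' < p k"
  proof (intro allI impI)
    fix x x' k assume k: "k \<in> newJ ?c x" and x': "x' < m" "s x' < s x" "\<not> saturated s p ?c x'"
    show "gT ?c * s x' < p k"
    proof (cases "k \<in> newJ c' x")
      case True thus ?thesis using K x' unsat by auto
    next
      case False
      hence "x = i" "k = j" using k by (auto split: if_splits)
      thus ?thesis using jb x' unsat by auto
    qed
  qed
  have D1': "\<forall>x x'. oldJ ?c x \<inter> newJ ?c x' = {}"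
  proof (intro allI)
    fix x x' show "oldJ ?c x \<inter> newJ ?c x' = {}"
      using O[of x] Nw[of x'] D1 jN by (auto split: if_splits)
  qed
  have D2': "\<forall>x x'. x \<noteq> x' \<longrightarrow> oldJ ?c x \<inter> oldJ ?c x' = {} \<and> newJ ?c x \<inter> newJ ?c x' = {}"
  proof (intro allI impI conjI)
    fix x x' :: nat assume ne: "x \<noteq> x'"
    show "oldJ ?c x \<inter> oldJ ?c x' = {}" using O[of x] O[of x'] D2 ne by blast
    have "newJ c' x \<inter> newJ c' x' = {}" using D2 ne by blast
    thus "newJ ?c x \<inter> newJ ?c x' = {}" using Nw[of x] Nw[of x'] jN ne by (auto split: if_splits)
  qed
  have D3': "\<forall>x. queue ?c \<inter> oldJ ?c x = {} \<and> queue ?c \<inter> newJ ?c x = {}"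
  proof
    fix x
    have a: "R \<inter> oldJ ?c x = {}"
    proof (cases "x = i")
      case False thus ?thesis using R D2 by auto
    qed auto
    have "R \<inter> newJ c' x = {}" using R D1 by blast
    hence b: "R \<inter> newJ ?c x = {}" using R Nw[of x] jN by (auto split: if_splits)
    have c: "queue c' \<inter> newJ ?c x = {}" using D3 Nw[of x] jN by (auto split: if_splits)
    show "queue ?c \<inter> oldJ ?c x = {} \<and> queue ?c \<inter> newJ ?c x = {}"
      using a b c D3 O[of x] by auto
  qed
  show ?thesis unfolding inv_def
    using T sub' q' D1' D2' D3' K' B by simp
qed

lemma step_inv:
  assumes sdec: "\<forall>i j. i \<le> j \<longrightarrow> j < m \<longrightarrow> s j \<le> s i"
    and spos: "\<forall>i<m. s i > 0" and ppos: "\<forall>j. p j > 0" and eta: "\<eta> \<ge> 1" and xi: "\<xi> > 1"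
    and st: "step m s p \<xi> \<gamma> \<eta> amort c c2" and I: "inv m s p \<xi> N c"
  shows "inv m s p \<xi> N c2"
  using st
proof (cases rule: step.cases)
  case (pick j) thus ?thesis using pick_inv[OF I] by simp
next
  case (raise j) thus ?thesis using raise_inv[OF sdec spos ppos eta xi I] by simp
next
  case (promote_sat j i) thus ?thesis using promote_inv[OF spos ppos eta I] by simp
next
  case (place j i c' xs R \<pi>)
  have I': "inv m s p \<xi> N c'" and jb0: "\<forall>i'<m. s i' < s i \<longrightarrow> \<not> saturated s p c' i' \<longrightarrow> gT c * s i' < p j"
    and cj: "cur c' = Some j" and G: "gT c' = gT c"
    using promote_inv[OF spos ppos eta I place(2,3,4)] place(5) by simp_all
  have jb: "\<forall>i'<m. s i' < s i \<longrightarrow> \<not> saturated s p c' i' \<longrightarrow> gT c' * s i' < p j" using jb0 G by simp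
  have im: "i < m" using place(3) unfolding Mt_def by simp
  have "R \<subseteq> oldJ c' i" using greedy_sub[of p _ xs] place(8,10) by (metis fst_conv)
  from place_inv[OF spos ppos I' cj im jb this] show ?thesis using place(1) by simp
qed

lemma steps_inv:
  assumes sdec: "\<forall>i j. i \<le> j \<longrightarrow> j < m \<longrightarrow> s j \<le> s i"
    and spos: "\<forall>i<m. s i > 0" and ppos: "\<forall>j. p j > 0" and eta: "\<eta> \<ge> 1" and xi: "\<xi> > 1"
    and st: "(step m s p \<xi> \<gamma> \<eta> amort)\<^sup>*\<^sup>* c c2" and I: "inv m s p \<xi> N c"
  shows "inv m s p \<xi> N c2"
  using st I
proof (induction rule: rtranclp_induct)
  case (step y z) thus ?case using step_inv[OF sdec spos ppos eta xi] by blast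
qed simp

lemma init_inv:
  assumes m: "m \<ge> 1" and sdec: "\<forall>i j. i \<le> j \<longrightarrow> j < m \<longrightarrow> s j \<le> s i"
    and spos: "\<forall>i<m. s i > 0" and ppos: "\<forall>j. p j > 0" and xi: "\<xi> > 1"
  shows "inv m s p \<xi> 1 (init_cfg s p)"
proof -
  let ?c = "init_cfg s p"
  have s0: "s 0 > 0" using spos m by auto
  have T: "gT ?c = p 0 / s 0" unfolding init_cfg_def by simp
  have Tp: "gT ?c > 0" using T s0 ppos by simp
  have K: "\<forall>i i' k. k \<in> newJ ?c i \<longrightarrow> i' < m \<longrightarrow> s i' < s i \<longrightarrow> \<not> saturated s p ?c i' \<longrightarrow> gT ?c * s i' < p k"
  proof (intro allI impI)
    fix i i' k assume "k \<in> newJ ?c i" "i' < m" "s i' < s i"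
    hence "i = 0" "k = 0" "s i' < s 0" unfolding init_cfg_def by (auto split: if_splits)
    hence "p 0 / s 0 * s i' < p 0 / s 0 * s 0" using s0 ppos by (intro mult_strict_left_mono) auto
    thus "gT ?c * s i' < p k" using T s0 \<open>k = 0\<close> by simp
  qed
  have B: "\<forall>\<sigma>. (\<forall>k<1. \<sigma> k < m) \<longrightarrow> (\<exists>i<m. gT ?c / \<xi> < (\<Sum>k\<in>{k\<in>{0..<1}. \<sigma> k = i}. p k) / s i)"
  proof (intro allI impI)
    fix \<sigma> :: "nat \<Rightarrow> nat" assume "\<forall>k<1. \<sigma> k < m"
    hence sm: "\<sigma> 0 < m" by simp
    have set: "{k\<in>{0..<1}. \<sigma> k = \<sigma> 0} = {0::nat}" by auto
    have "gT ?c / \<xi> < gT ?c" using Tp xi by (simp add: divide_less_eq)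
    also have "gT ?c \<le> p 0 / s (\<sigma> 0)" using T sdec sm spos ppos s0
      by (simp add: frac_le less_imp_le)
    finally show "\<exists>i<m. gT ?c / \<xi> < (\<Sum>k\<in>{k\<in>{0..<1}. \<sigma> k = i}. p k) / s i"
      using sm set by (intro exI[of _ "\<sigma> 0"]) simp
  qed
  show ?thesis unfolding inv_def using Tp K B by (simp add: init_cfg_def)
qed

lemma arrive_inv:
  assumes spos: "\<forall>i<m. s i > 0" and ppos: "\<forall>j. p j > 0"
    and I: "inv m s p \<xi> n c" and cn: "cur c = None"
  shows "inv m s p \<xi> (Suc n) (c\<lparr>queue := {n}\<rparr>)"
proof -
  have sub: "\<forall>i. oldJ c i \<subseteq> {..<n} \<and> newJ c i \<subseteq> {..<n}"
    and B: "\<forall>\<sigma>. (\<forall>k<n. \<sigma> k < m) \<longrightarrow> (\<exists>i<m. gT c / \<xi> < (\<Sum>k\<in>{k\<in>{0..<n}. \<sigma> k = i}. p k) / s i)"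
    using I unfolding inv_def by simp_all
  have sub': "\<forall>i. oldJ c i \<subseteq> {..<Suc n} \<and> newJ c i \<subseteq> {..<Suc n}" using sub by (metis lessThan_Suc subset_insertI subset_trans)
  have D: "\<forall>i. {n} \<inter> oldJ c i = {} \<and> {n} \<inter> newJ c i = {}" using sub by blast
  have B': "\<forall>\<sigma>. (\<forall>k<Suc n. \<sigma> k < m) \<longrightarrow> (\<exists>i<m. gT c / \<xi> < (\<Sum>k\<in>{k\<in>{0..<Suc n}. \<sigma> k = i}. p k) / s i)"
  proof (intro allI impI)
    fix \<sigma> :: "nat \<Rightarrow> nat" assume "\<forall>k<Suc n. \<sigma> k < m"
    hence "\<forall>k<n. \<sigma> k < m" by simp
    then obtain i where i: "i < m" "gT c / \<xi> < (\<Sum>k\<in>{k\<in>{0..<n}. \<sigma> k = i}. p k) / s i" using B by blast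
    have "(\<Sum>k\<in>{k\<in>{0..<n}. \<sigma> k = i}. p k) \<le> (\<Sum>k\<in>{k\<in>{0..<Suc n}. \<sigma> k = i}. p k)"
      using ppos by (intro sum_mono2) (auto intro: less_imp_le)
    hence "(\<Sum>k\<in>{k\<in>{0..<n}. \<sigma> k = i}. p k) / s i \<le> (\<Sum>k\<in>{k\<in>{0..<Suc n}. \<sigma> k = i}. p k) / s i"
      using spos i(1) by (intro divide_right_mono) auto
    thus "\<exists>i<m. gT c / \<xi> < (\<Sum>k\<in>{k\<in>{0..<Suc n}. \<sigma> k = i}. p k) / s i" using i by force
  qed
  have "saturated s p (c\<lparr>queue := {n}\<rparr>) = saturated s p c" unfolding saturated_def by simp
  then show ?thesis using I sub' D B' cn unfolding inv_def by simp
qed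

lemma reach_inv:
  assumes m: "m \<ge> 1" and sdec: "\<forall>i j. i \<le> j \<longrightarrow> j < m \<longrightarrow> s j \<le> s i"
    and spos: "\<forall>i<m. s i > 0" and ppos: "\<forall>j. p j > 0" and eta: "\<eta> \<ge> 1" and xi: "\<xi> > 1"
    and r: "reach m s p \<xi> \<gamma> \<eta> amort n c"
  shows "inv m s p \<xi> n c \<and> cur c = None"
  using r
proof (induction rule: reach.induct)
  case first thus ?case using init_inv[OF m sdec spos ppos xi] by (simp add: init_cfg_def)
next
  case (arrive n c c')
  thus ?case using steps_inv[OF sdec spos ppos eta xi] arrive_inv[OF spos ppos] by blast
qed

theorem lemma3:
  fixes m :: nat and s p :: "nat \<Rightarrow> real" and \<xi> \<gamma> \<eta> :: real and amort :: bool
    and n :: nat and c :: cfg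
  assumes "m \<ge> 1"
    and "\<forall>i j. i \<le> j \<longrightarrow> j < m \<longrightarrow> s j \<le> s i"
    and "\<forall>i<m. s i > 0"
    and "\<forall>j. p j > 0"
    and "\<xi> > 1" and "0 < \<gamma>" and "\<gamma> < 1" and "\<eta> \<ge> 1"
    and "reach m s p \<xi> \<gamma> \<eta> amort n c"
  shows "gT c / \<xi> < OPT m s p {0..<n}"
proof -
  have I: "inv m s p \<xi> n c" using reach_inv[OF assms(1,2,3,4,8,5,9)] by simp
  hence B: "\<forall>\<sigma>. (\<forall>k<n. \<sigma> k < m) \<longrightarrow> (\<exists>i<m. gT c / \<xi> < (\<Sum>k\<in>{k\<in>{0..<n}. \<sigma> k = i}. p k) / s i)"
    unfolding inv_def by simp
  define f where "f = (\<lambda>\<sigma>. Max ((\<lambda>i. (\<Sum>j\<in>{j\<in>{0..<n}. \<sigma> j = i}. p j) / s i) ` {..<m}))"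
  have O: "OPT m s p {0..<n} = Min (f ` ({0..<n} \<rightarrow>\<^sub>E {..<m}))" unfolding OPT_def f_def by simp
  have fin: "finite (f ` ({0..<n} \<rightarrow>\<^sub>E {..<m}))" by (intro finite_imageI finite_PiE) auto
  have "(\<lambda>k. if k \<in> {0..<n} then 0 else undefined) \<in> {0..<n} \<rightarrow>\<^sub>E {..<m}" using assms(1) by auto
  hence ne: "f ` ({0..<n} \<rightarrow>\<^sub>E {..<m}) \<noteq> {}" by blast
  obtain \<sigma> where \<sigma>: "\<sigma> \<in> {0..<n} \<rightarrow>\<^sub>E {..<m}" "OPT m s p {0..<n} = f \<sigma>"
    using Min_in[OF fin ne] O by auto
  have "\<forall>k<n. \<sigma> k < m" using \<sigma>(1) by auto
  then obtain i where i: "i < m" "gT c / \<xi> < (\<Sum>k\<in>{k\<in>{0..<n}. \<sigma> k = i}. p k) / s i" using B by blast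
  have "(\<Sum>k\<in>{k\<in>{0..<n}. \<sigma> k = i}. p k) / s i \<le> f \<sigma>"
    unfolding f_def using i(1) by (intro Max_ge) auto
  thus ?thesis using i \<sigma>(2) by linarith
qed

end
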